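(* Let $U:\mathbb{R}^d\to\mathbb{R}$ be twice continuously differentiable with $\nabla U(0)=0$ and $\sup_x\|\mathrm{D}^2U(x)\|\le\mathtt{L}$, and let $\bar\gamma>0$, $L_{\bar\gamma}=2\mathtt{L}+\bar\gamma\mathtt{L}^2$. Then for any integer $k\ge1$, $\gamma\in(0,\bar\gamma]$ and $x\in\mathbb{R}^d$, $$\int_{\mathbb{R}^d}\|y\|^2Q_\gamma^k(x,dy)\le e^{k\gamma L_{\bar\gamma}}\|x\|^2+2\gamma dk\,e^{(k-1)\gamma L_{\bar\gamma}}.$$
   Context: $Q_\gamma(x,A)=\int\mathbb{1}_A(x-\gamma\nabla U(x)+\sqrt{2\gamma}z)\varphi(z)dz$ is the unadjusted Langevin kernel, $\varphi$ the standard Gaussian density on $\mathbb{R}^d$; $Q_\gamma^k$ is its $k$-th iterate. *)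

theory Defs
  imports "HOL-Probability.Probability"
begin

definition gauss_density :: "'a::euclidean_space \<Rightarrow> real" where
  "gauss_density z = (2 * pi) powr (- real DIM('a) / 2) * exp (- (norm z)\<^sup>2 / 2)"

definition std_gauss :: "'a::euclidean_space measure" where
  "std_gauss = density lborel (\<lambda>z. ennreal (gauss_density z))"

text \<open>Unadjusted Langevin kernel Q_gamma(x, .), with G the gradient of U:
  the law of x - gamma G(x) + sqrt(2 gamma) Z, Z standard Gaussian.\<close>
definition ula_kernel :: "('a::euclidean_space \<Rightarrow> 'a) \<Rightarrow> real \<Rightarrow> 'a \<Rightarrow> 'a measure" where
  "ula_kernel G \<gamma> x = distr std_gauss borel (\<lambda>z. x - \<gamma> *\<^sub>R G x + sqrt (2 * \<gamma>) *\<^sub>R z)"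

fun ula_iter :: "('a::euclidean_space \<Rightarrow> 'a) \<Rightarrow> real \<Rightarrow> nat \<Rightarrow> 'a \<Rightarrow> 'a measure" where
  "ula_iter G \<gamma> 0 x = return borel x"
| "ula_iter G \<gamma> (Suc k) x = bind (ula_iter G \<gamma> k x) (ula_kernel G \<gamma>)"

end

theory Submission
  imports Defs
begin

lemma norm_sq_basis: "(norm (z::'a::euclidean_space))\<^sup>2 = (\<Sum>b\<in>Basis. (z \<bullet> b)\<^sup>2)"
  unfolding power2_norm_eq_inner by (subst euclidean_inner) (simp add: power2_eq_square)

lemma gauss_prod: "gauss_density (z::'a::euclidean_space) = (\<Prod>b\<in>Basis. std_normal_density (z \<bullet> b))"
proof -
  have "(2 * pi) powr (- real DIM('a) / 2) = (1 / sqrt (2*pi)) ^ DIM('a)"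
  proof -
    have "(2 * pi) powr (- real DIM('a) / 2) = inverse ((2*pi) powr (real DIM('a) / 2))"
      by (simp add: powr_minus[symmetric])
    also have "(2*pi) powr (real DIM('a) / 2) = ((2*pi) powr (1/2)) powr (real DIM('a))"
      by (simp add: powr_powr)
    also have "\<dots> = sqrt (2*pi) ^ DIM('a)"
      by (simp add: powr_half_sqrt powr_realpow)
    finally show ?thesis by (simp only: power_one_over inverse_eq_divide)
  qed
  moreover have "exp (- (norm z)\<^sup>2 / 2) = (\<Prod>b\<in>Basis. exp (- (z \<bullet> b)\<^sup>2 / 2))"
    by (simp add: norm_sq_basis exp_sum[symmetric] sum_negf sum_divide_distrib)
  ultimately show ?thesis
    unfolding gauss_density_def std_normal_density_def prod.distrib prod_constant by (simp only:)
qed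

lemma nn_std_normal_one: "(\<integral>\<^sup>+t. ennreal (std_normal_density t) \<partial>lborel) = 1"
proof -
  have "(\<integral>\<^sup>+t. ennreal (std_normal_density t) \<partial>lborel) = ennreal (\<integral>t. std_normal_density t \<partial>lborel)"
    by (rule nn_integral_eq_integral[OF integrable_normal_density]) (simp_all only: zero_less_one normal_density_nonneg AE_I2)
  also have "\<dots> = 1" by (simp only: integral_normal_density ennreal_1)
  finally show ?thesis .
qed

lemma gauss_density_nonneg: "0 \<le> gauss_density z"
  by (simp add: gauss_density_def)

lemma gauss_density_meas[measurable]: "gauss_density \<in> borel_measurable borel"
  unfolding gauss_density_def by measurable

lemma gauss_term:
  fixes b' :: "'a::euclidean_space"
  assumes b': "b' \<in> Basis" and h[measurable]: "h \<in> borel_measurable borel" and nn: "\<And>t. 0 \<le> h t"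
  shows "(\<integral>\<^sup>+z. ennreal (h (z \<bullet> b')) \<partial>(std_gauss::'a measure)) = (\<integral>\<^sup>+t. ennreal (std_normal_density t * h t) \<partial>lborel)"
proof -
  define f where "f b t = std_normal_density t * (if b = b' then h t else 1)" for b t
  have fm[measurable]: "f b \<in> borel_measurable borel" for b unfolding f_def by measurable
  have fnn: "0 \<le> f b t" for b t unfolding f_def using nn by simp
  have "(\<integral>\<^sup>+z. ennreal (h (z \<bullet> b')) \<partial>(std_gauss::'a measure))
      = (\<integral>\<^sup>+z. ennreal (gauss_density z) * ennreal (h (z \<bullet> b')) \<partial>lborel)"
    unfolding std_gauss_def by (subst nn_integral_density) auto
  also have "\<dots> = (\<integral>\<^sup>+z. ennreal (\<Prod>b\<in>Basis. f b (z \<bullet> b)) \<partial>lborel)"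
  proof (rule nn_integral_cong)
    fix z :: 'a
    have "(\<Prod>b\<in>Basis. f b (z \<bullet> b)) = (\<Prod>b\<in>Basis. std_normal_density (z \<bullet> b)) * (\<Prod>b\<in>Basis. (if b = b' then h (z \<bullet> b) else 1))"
      unfolding f_def prod.distrib by simp
    also have "\<dots> = gauss_density z * h (z \<bullet> b')"
      using b' by (simp add: gauss_prod)
    finally show "ennreal (gauss_density z) * ennreal (h (z \<bullet> b')) = ennreal (\<Prod>b\<in>Basis. f b (z \<bullet> b))"
      by (simp add: ennreal_mult' gauss_density_nonneg nn)
  qed
  also have "\<dots> = (\<Prod>b\<in>Basis. (\<integral>\<^sup>+t. f b t \<partial>lborel))"
    by (subst prod_ennreal[symmetric], simp add: fnn, rule nn_integral_lborel_prod) (auto simp: fnn)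
  also have "\<dots> = (\<Prod>b\<in>Basis. (if b = b' then (\<integral>\<^sup>+t. ennreal (std_normal_density t * h t) \<partial>lborel) else 1))"
    by (rule prod.cong) (auto simp: f_def nn_std_normal_one)
  also have "\<dots> = (\<integral>\<^sup>+t. ennreal (std_normal_density t * h t) \<partial>lborel)"
    using b' by simp
  finally show ?thesis .
qed

lemma nn_normal_sq: "(\<integral>\<^sup>+t. ennreal (std_normal_density t * (a + c * t)\<^sup>2) \<partial>lborel) = ennreal (a\<^sup>2 + c\<^sup>2)"
proof -
  have e: "std_normal_density t * (a + c * t)\<^sup>2 = a\<^sup>2 * (std_normal_density t * t ^ (2*0))
     + (2*a*c) * (std_normal_density t * t ^ (2*0+1)) + c\<^sup>2 * (std_normal_density t * t ^ (2*1))" for t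
    by (simp add: power2_eq_square algebra_simps)
  have m0: "has_bochner_integral lborel (\<lambda>x. std_normal_density x * x ^ (2 * 0)) 1"
    using std_normal_moment_even[of 0] by simp
  have m1: "has_bochner_integral lborel (\<lambda>x. std_normal_density x * x ^ (2 * 0 + 1)) 0"
    using std_normal_moment_odd[of 0] by simp
  have m2: "has_bochner_integral lborel (\<lambda>x. std_normal_density x * x ^ (2 * 1)) 1"
    using std_normal_moment_even[of 1] by simp
  have hb: "has_bochner_integral lborel (\<lambda>t. std_normal_density t * (a + c * t)\<^sup>2) (a\<^sup>2 * 1 + (2*a*c) * 0 + c\<^sup>2 * 1)"
    unfolding e
    by (intro has_bochner_integral_add has_bochner_integral_mult_right m0 m1 m2)
  have int: "integrable lborel (\<lambda>t. std_normal_density t * (a + c * t)\<^sup>2)"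
    using hb by (rule integrable.intros)
  have "(\<integral>t. std_normal_density t * (a + c * t)\<^sup>2 \<partial>lborel) = a\<^sup>2 * 1 + (2*a*c) * 0 + c\<^sup>2 * 1"
    using hb by (rule has_bochner_integral_integral_eq)
  then show ?thesis
    using int by (subst nn_integral_eq_integral) auto
qed

lemma gauss_prob: "prob_space (std_gauss :: 'a::euclidean_space measure)"
proof
  obtain b' :: 'a where b': "b' \<in> Basis" using nonempty_Basis by blast
  have "emeasure (std_gauss :: 'a measure) (space std_gauss) = (\<integral>\<^sup>+z. ennreal ((\<lambda>_. 1) (z \<bullet> b')) \<partial>(std_gauss :: 'a measure))"
    by (simp add: nn_integral_const)
  also have "\<dots> = 1"
    by (subst gauss_term[OF b']) (auto simp: nn_std_normal_one)
  finally show "emeasure (std_gauss :: 'a measure) (space std_gauss) = 1" .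
qed

lemma sets_std_gauss[measurable_cong, simp]: "sets std_gauss = sets borel"
  by (simp add: std_gauss_def)

lemma gauss_second:
  fixes v :: "'a::euclidean_space"
  shows "(\<integral>\<^sup>+z. ennreal ((norm (v + c *\<^sub>R z))\<^sup>2) \<partial>(std_gauss :: 'a measure)) = ennreal ((norm v)\<^sup>2 + c\<^sup>2 * real DIM('a))"
proof -
  have "(\<integral>\<^sup>+z. ennreal ((norm (v + c *\<^sub>R z))\<^sup>2) \<partial>(std_gauss :: 'a measure))
      = (\<integral>\<^sup>+z. (\<Sum>b\<in>Basis. ennreal ((v \<bullet> b + c * (z \<bullet> b))\<^sup>2)) \<partial>(std_gauss :: 'a measure))"
    by (intro nn_integral_cong) (simp add: norm_sq_basis sum_ennreal inner_add_left)
  also have "\<dots> = (\<Sum>b\<in>Basis. (\<integral>\<^sup>+z. ennreal ((\<lambda>t. (v \<bullet> b + c * t)\<^sup>2) (z \<bullet> b)) \<partial>(std_gauss :: 'a measure)))"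
    by (subst nn_integral_sum) auto
  also have "\<dots> = (\<Sum>b\<in>Basis. ennreal ((v \<bullet> b)\<^sup>2 + c\<^sup>2))"
    by (intro sum.cong refl, subst gauss_term) (auto simp: nn_normal_sq)
  also have "\<dots> = ennreal ((norm v)\<^sup>2 + c\<^sup>2 * real DIM('a))"
    by (subst sum_ennreal) (auto simp: norm_sq_basis sum.distrib mult.commute)
  finally show ?thesis .
qed

lemma kernel_meas:
  fixes G :: "'a::euclidean_space \<Rightarrow> 'a"
  assumes [measurable]: "G \<in> borel_measurable borel"
  shows "ula_kernel G \<gamma> \<in> borel \<rightarrow>\<^sub>M subprob_algebra borel"
  unfolding ula_kernel_def
proof (rule measurable_distr2[where M="std_gauss"])
  show "(\<lambda>_. std_gauss) \<in> borel \<rightarrow>\<^sub>M subprob_algebra std_gauss"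
    by (intro measurable_const) (simp add: space_subprob_algebra prob_space_imp_subprob_space[OF gauss_prob])
  show "(\<lambda>(x, z). x - \<gamma> *\<^sub>R G x + sqrt (2 * \<gamma>) *\<^sub>R z) \<in> borel \<Otimes>\<^sub>M std_gauss \<rightarrow>\<^sub>M borel"
  proof -
    have st: "sets (borel \<Otimes>\<^sub>M std_gauss) = sets (borel \<Otimes>\<^sub>M (borel::'a measure))"
      by (rule sets_pair_measure_cong) auto
    have "(\<lambda>p. fst p - \<gamma> *\<^sub>R G (fst p) + sqrt (2 * \<gamma>) *\<^sub>R snd p) \<in> borel_measurable (borel \<Otimes>\<^sub>M (borel::'a measure))"
      by (intro borel_measurable_add borel_measurable_diff borel_measurable_scaleR borel_measurable_const
          measurable_fst'' measurable_snd'' measurable_compose[OF measurable_fst assms] measurable_fst measurable_snd)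
    then show ?thesis unfolding case_prod_beta measurable_cong_sets[OF st refl] .
  qed
qed

lemma kernel_second:
  fixes G :: "'a::euclidean_space \<Rightarrow> 'a"
  assumes [measurable]: "G \<in> borel_measurable borel" and "\<gamma> > 0"
  shows "(\<integral>\<^sup>+w. ennreal ((norm w)\<^sup>2) \<partial>ula_kernel G \<gamma> y) = ennreal ((norm (y - \<gamma> *\<^sub>R G y))\<^sup>2 + 2 * \<gamma> * real DIM('a))"
proof -
  have "(sqrt (2 * \<gamma>))\<^sup>2 = 2 * \<gamma>" using assms(2) by simp
  have fm: "(\<lambda>z. y - \<gamma> *\<^sub>R G y + sqrt (2 * \<gamma>) *\<^sub>R z) \<in> std_gauss \<rightarrow>\<^sub>M (borel :: 'a measure)"
    unfolding measurable_cong_sets[OF sets_std_gauss refl]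
    by (intro borel_measurable_continuous_onI continuous_intros)
  have "(\<integral>\<^sup>+w. ennreal ((norm w)\<^sup>2) \<partial>distr std_gauss borel (\<lambda>z. y - \<gamma> *\<^sub>R G y + sqrt (2 * \<gamma>) *\<^sub>R z))
      = (\<integral>\<^sup>+z. ennreal ((norm (y - \<gamma> *\<^sub>R G y + sqrt (2 * \<gamma>) *\<^sub>R z))\<^sup>2) \<partial>std_gauss)"
  proof (rule nn_integral_distr[OF fm])
    show "(\<lambda>w. ennreal ((norm w)\<^sup>2)) \<in> borel_measurable (distr std_gauss borel (\<lambda>z. y - \<gamma> *\<^sub>R G y + sqrt (2 * \<gamma>) *\<^sub>R z))"
      unfolding measurable_cong_sets[OF sets_distr refl] by measurable
  qed
  also have "\<dots> = ennreal ((norm (y - \<gamma> *\<^sub>R G y))\<^sup>2 + (sqrt (2 * \<gamma>))\<^sup>2 * real DIM('a))"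
    by (rule gauss_second)
  finally show ?thesis unfolding ula_kernel_def using \<open>(sqrt (2 * \<gamma>))\<^sup>2 = 2 * \<gamma>\<close> by simp
qed

lemma iter_props:
  fixes G :: "'a::euclidean_space \<Rightarrow> 'a"
  assumes [measurable]: "G \<in> borel_measurable borel"
  shows "subprob_space (ula_iter G \<gamma> k x) \<and> sets (ula_iter G \<gamma> k x) = sets borel"
proof (induction k)
  case 0
  then show ?case by (simp add: subprob_space_return)
next
  case (Suc k)
  then have sp: "subprob_space (ula_iter G \<gamma> k x)" and st: "sets (ula_iter G \<gamma> k x) = sets borel" by auto
  have km: "ula_kernel G \<gamma> \<in> ula_iter G \<gamma> k x \<rightarrow>\<^sub>M subprob_algebra borel"
    using kernel_meas[OF assms] by (simp add: measurable_cong_sets[OF st refl])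
  have "sets (ula_iter G \<gamma> k x \<bind> ula_kernel G \<gamma>) = sets borel"
    by (rule sets_bind) (use km measurable_space[OF km] subprob_space.subprob_not_empty[OF sp] in \<open>auto simp: space_subprob_algebra\<close>)
  then show ?case using subprob_space_bind[OF sp km] by simp
qed

theorem lemma7:
  fixes U :: "'a::euclidean_space \<Rightarrow> real"
    and G :: "'a \<Rightarrow> 'a"
    and H :: "'a \<Rightarrow> 'a \<Rightarrow>\<^sub>L 'a"
    and L \<gamma>bar \<gamma> :: real and k :: nat and x :: 'a
  assumes grad: "\<And>y. (U has_derivative (\<lambda>h. G y \<bullet> h)) (at y)"
    and hess: "\<And>y. (G has_derivative blinfun_apply (H y)) (at y)"
    and hess_cont: "continuous_on UNIV H"
    and grad0: "G 0 = 0"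
    and hess_bound: "\<And>y. norm (H y) \<le> L"
    and \<gamma>bar_pos: "\<gamma>bar > 0"
    and \<gamma>_range: "0 < \<gamma>" "\<gamma> \<le> \<gamma>bar"
    and k_ge: "k \<ge> 1"
  shows "(\<integral>\<^sup>+ y. ennreal ((norm y)\<^sup>2) \<partial>(ula_iter G \<gamma> k x))
     \<le> ennreal (exp (real k * \<gamma> * (2 * L + \<gamma>bar * L\<^sup>2)) * (norm x)\<^sup>2
        + 2 * \<gamma> * real DIM('a) * real k * exp ((real k - 1) * \<gamma> * (2 * L + \<gamma>bar * L\<^sup>2)))"
proof -
  define Lb where "Lb = 2 * L + \<gamma>bar * L\<^sup>2"
  define a where "a = exp (\<gamma> * Lb)"
  define D where "D = 2 * \<gamma> * real DIM('a)"
  have L0: "0 \<le> L" using hess_bound[of 0] norm_ge_zero[of "H 0"] by linarith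
  have a1: "1 \<le> a" unfolding a_def Lb_def using L0 \<gamma>_range \<gamma>bar_pos by simp
  have D0: "0 \<le> D" unfolding D_def using \<gamma>_range by simp
  have Gc: "continuous_on UNIV G"
    using hess by (meson has_derivative_continuous continuous_at_imp_continuous_on)
  then have Gm[measurable]: "G \<in> borel_measurable borel"
    by (rule borel_measurable_continuous_onI)
  have Glip: "norm (G y) \<le> L * norm y" for y
  proof -
    have "norm (G y - G 0) \<le> L * norm (y - 0)"
      by (rule differentiable_bound[where S=UNIV and f'="\<lambda>x. blinfun_apply (H x)"])
        (auto simp: hess norm_blinfun.rep_eq[symmetric] hess_bound)
    then show ?thesis by (simp add: grad0)
  qed
  have quad: "(norm (y - \<gamma> *\<^sub>R G y))\<^sup>2 \<le> a * (norm y)\<^sup>2" for y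
  proof -
    have e: "(norm (y - \<gamma> *\<^sub>R G y))\<^sup>2 = (norm y)\<^sup>2 - 2 * \<gamma> * (y \<bullet> G y) + \<gamma>\<^sup>2 * (norm (G y))\<^sup>2"
      unfolding power2_norm_eq_inner by (simp add: inner_diff_left inner_diff_right inner_commute algebra_simps power2_eq_square)
    have c1: "- (y \<bullet> G y) \<le> L * (norm y)\<^sup>2"
      using norm_cauchy_schwarz[of y "G y"] Glip[of y] Cauchy_Schwarz_ineq2[of y "G y"]
    proof -
      have "norm y * norm (G y) \<le> norm y * (L * norm y)"
        using Glip[of y] by (intro mult_left_mono) auto
      then show ?thesis using Cauchy_Schwarz_ineq2[of y "G y"] by (simp add: power2_eq_square algebra_simps)
    qed
    have c2: "(norm (G y))\<^sup>2 \<le> L\<^sup>2 * (norm y)\<^sup>2"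
      using power_mono[OF Glip[of y] norm_ge_zero, of 2] by (simp only: power_mult_distrib)
    have "(norm (y - \<gamma> *\<^sub>R G y))\<^sup>2 \<le> (norm y)\<^sup>2 + 2 * \<gamma> * (L * (norm y)\<^sup>2) + \<gamma>\<^sup>2 * (L\<^sup>2 * (norm y)\<^sup>2)"
    proof -
      have "2 * \<gamma> * (- (y \<bullet> G y)) \<le> 2 * \<gamma> * (L * (norm y)\<^sup>2)"
        by (rule mult_left_mono[OF c1]) (use \<gamma>_range in simp)
      then have "- (2 * \<gamma> * (y \<bullet> G y)) \<le> 2 * \<gamma> * (L * (norm y)\<^sup>2)"
        by (simp only: mult_minus_right)
      moreover have "\<gamma>\<^sup>2 * (norm (G y))\<^sup>2 \<le> \<gamma>\<^sup>2 * (L\<^sup>2 * (norm y)\<^sup>2)"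
        by (rule mult_left_mono[OF c2]) simp
      ultimately show ?thesis unfolding e by linarith
    qed
    also have "\<dots> \<le> (norm y)\<^sup>2 + 2 * \<gamma> * (L * (norm y)\<^sup>2) + \<gamma> * \<gamma>bar * (L\<^sup>2 * (norm y)\<^sup>2)"
      using \<gamma>_range by (intro add_left_mono mult_right_mono) (auto simp: power2_eq_square)
    also have "\<dots> = (1 + \<gamma> * Lb) * (norm y)\<^sup>2"
      by (simp add: Lb_def algebra_simps)
    also have "\<dots> \<le> a * (norm y)\<^sup>2"
      unfolding a_def by (intro mult_right_mono) (auto simp: exp_ge_add_one_self add.commute)
    finally show ?thesis .
  qed
  have step: "(\<integral>\<^sup>+w. ennreal ((norm w)\<^sup>2) \<partial>ula_kernel G \<gamma> y) \<le> ennreal (a * (norm y)\<^sup>2 + D)" for y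
    unfolding kernel_second[OF Gm \<gamma>_range(1)] D_def using quad[of y] by (intro ennreal_leI) auto
  have main: "(\<integral>\<^sup>+ y. ennreal ((norm y)\<^sup>2) \<partial>(ula_iter G \<gamma> n x)) \<le> ennreal (a ^ n * (norm x)\<^sup>2 + D * (\<Sum>j<n. a ^ j))" for n
  proof (induction n)
    case 0
    then show ?case by (simp add: nn_integral_return)
  next
    case (Suc n)
    let ?M = "ula_iter G \<gamma> n x"
    have sp: "subprob_space ?M" and st: "sets ?M = sets borel" using iter_props[OF Gm] by auto
    have km: "ula_kernel G \<gamma> \<in> ?M \<rightarrow>\<^sub>M subprob_algebra borel"
      using kernel_meas[OF Gm] by (simp add: measurable_cong_sets[OF st refl])
    have "(\<integral>\<^sup>+ y. ennreal ((norm y)\<^sup>2) \<partial>(ula_iter G \<gamma> (Suc n) x))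
        = (\<integral>\<^sup>+ y. (\<integral>\<^sup>+w. ennreal ((norm w)\<^sup>2) \<partial>ula_kernel G \<gamma> y) \<partial>?M)"
      by (simp, rule nn_integral_bind[OF _ km]) measurable
    also have "\<dots> \<le> (\<integral>\<^sup>+ y. ennreal a * ennreal ((norm y)\<^sup>2) + ennreal D \<partial>?M)"
    proof (rule nn_integral_mono)
      fix y :: 'a
      have "ennreal (a * (norm y)\<^sup>2 + D) = ennreal a * ennreal ((norm y)\<^sup>2) + ennreal D"
        using a1 D0 by (simp add: ennreal_mult)
      then show "(\<integral>\<^sup>+w. ennreal ((norm w)\<^sup>2) \<partial>ula_kernel G \<gamma> y) \<le> ennreal a * ennreal ((norm y)\<^sup>2) + ennreal D"
        using step[of y] by simp
    qed
    also have "\<dots> = ennreal a * (\<integral>\<^sup>+ y. ennreal ((norm y)\<^sup>2) \<partial>?M) + ennreal D * emeasure ?M (space ?M)"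
      by (subst nn_integral_add) (auto simp: nn_integral_cmult measurable_cong_sets[OF st refl])
    also have "\<dots> \<le> ennreal a * ennreal (a ^ n * (norm x)\<^sup>2 + D * (\<Sum>j<n. a ^ j)) + ennreal D * 1"
      by (intro add_mono mult_left_mono Suc.IH subprob_space.subprob_emeasure_le_1[OF sp]) auto
    also have "\<dots> = ennreal (a ^ Suc n * (norm x)\<^sup>2 + D * (\<Sum>j<Suc n. a ^ j))"
    proof -
      define B where "B = a ^ n * (norm x)\<^sup>2 + D * (\<Sum>j<n. a ^ j)"
      have B0: "0 \<le> B" unfolding B_def using a1 D0 by (intro add_nonneg_nonneg mult_nonneg_nonneg sum_nonneg) auto
      have ab: "0 \<le> a * B" using a1 B0 by simp
      have "ennreal a * ennreal B + ennreal D * 1 = ennreal (a * B + D)"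
        using ennreal_plus[OF ab D0] ennreal_mult'[of a B] a1 by simp
      moreover have "(\<Sum>j<Suc n. a ^ j) = 1 + a * (\<Sum>j<n. a ^ j)"
        by (simp only: sum.lessThan_Suc_shift) (simp add: sum_distrib_left)
      then have "a * B + D = a ^ Suc n * (norm x)\<^sup>2 + D * (\<Sum>j<Suc n. a ^ j)"
        unfolding B_def by (simp add: algebra_simps)
      ultimately show ?thesis unfolding B_def by simp
    qed
    finally show ?case .
  qed
  have sumb: "(\<Sum>j<k. a ^ j) \<le> real k * a ^ (k - 1)"
  proof -
    have "(\<Sum>j<k. a ^ j) \<le> (\<Sum>j<k. a ^ (k - 1))"
      using a1 by (intro sum_mono power_increasing) auto
    then show ?thesis by simp
  qed
  have ak: "a ^ k = exp (real k * \<gamma> * Lb)" unfolding a_def by (simp add: exp_of_nat_mult[symmetric] mult.assoc)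
  have ak1: "a ^ (k - 1) = exp ((real k - 1) * \<gamma> * Lb)"
    unfolding a_def using k_ge by (simp add: exp_of_nat_mult[symmetric] mult.assoc of_nat_diff)
  have "(\<integral>\<^sup>+ y. ennreal ((norm y)\<^sup>2) \<partial>(ula_iter G \<gamma> k x)) \<le> ennreal (a ^ k * (norm x)\<^sup>2 + D * (\<Sum>j<k. a ^ j))"
    by (rule main)
  also have "\<dots> \<le> ennreal (a ^ k * (norm x)\<^sup>2 + D * (real k * a ^ (k - 1)))"
    using sumb D0 by (intro ennreal_leI add_left_mono mult_left_mono) auto
  finally show ?thesis
    unfolding ak ak1 D_def Lb_def by (simp add: algebra_simps)
qed

end
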